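(* Let $\{F_1,F_2,F_3,\ldots,F_m\}$, $m\ge2$, be a collection of $X$-forests (all rooted or all unrooted), and let $F$ be a maximum agreement forest for it. Then there exists a maximal agreement forest $F'$ for $F_1$ and $F_2$ such that $F$ is also a maximum agreement forest for $\{F',F_3,\ldots,F_m\}$.
   Context: $X$-forests: for a finite label set $X$, an unrooted $X$-forest is a subgraph of a tree whose leaves are bijectively labeled by $X$ and whose unlabeled vertices have degree at least 3, each component containing a leaf, component label sets partitioning $X$; a rooted $X$-forest is the same with a distinguished leaf $\rho\in X$ as root of the underlying tree, each component rooted at $\rho$ or at the lowest common ancestor of its labeled leaves. Forests are taken up to forced contraction (unlabeled degree-2 non-root vertices suppressed, unlabeled vertices of degree $<2$ deleted). $\mathrm{Ord}(F)$ is the number of components. $F'$ is a subforest of $F$ if, up to forced contraction, $F'$ is isomorphic (preserving labels and roots) to $F$ with some edges deleted. An agreement forest for a collection is an $X$-forest that is a subforest of each member; a maximum agreement forest is one of minimum order. An agreement forest $F$ for $F_1,F_2$ is a maximal agreement forest if there is no agreement forest $F'$ for $F_1,F_2$ with $F$ a subforest of $F'$ and $\mathrm{Ord}(F')<\mathrm{Ord}(F)$. *)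

theory Defs
  imports Main
begin

text \<open>Edges are ordered pairs; in the rooted setting an edge (u,w) points from the
  parent u to the child w (away from the root), in the unrooted setting the
  orientation is irrelevant.  The mode rt is None (unrooted) or Some rho
  (rooted, rho the root label).\<close>

record ('v, 'x) xgraph =
  gV :: "'v set"
  gE :: "('v \<times> 'v) set"
  glab :: "'x \<Rightarrow> 'v"

definition adjrel :: "('v, 'x) xgraph \<Rightarrow> ('v \<times> 'v) set" where
  "adjrel G = {(u, w). (u, w) \<in> gE G \<or> (w, u) \<in> gE G}"

definition nbrs :: "('v, 'x) xgraph \<Rightarrow> 'v \<Rightarrow> 'v set" where
  "nbrs G v = {u. (u, v) \<in> gE G \<or> (v, u) \<in> gE G}"

definition deg :: "('v, 'x) xgraph \<Rightarrow> 'v \<Rightarrow> nat" where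
  "deg G v = card (nbrs G v)"

definition comps :: "('v, 'x) xgraph \<Rightarrow> 'v set set" where
  "comps G = {{u \<in> gV G. (v, u) \<in> (adjrel G)\<^sup>*} | v. v \<in> gV G}"

definition Ord :: "('v, 'x) xgraph \<Rightarrow> nat" where
  "Ord G = card (comps G)"

definition acyclic_graph :: "('v, 'x) xgraph \<Rightarrow> bool" where
  "acyclic_graph G \<longleftrightarrow> \<not> (\<exists>cs. 3 \<le> length cs \<and> distinct cs \<and> set cs \<subseteq> gV G \<and>
      (\<forall>i < length cs. (cs ! i, cs ! ((i + 1) mod length cs)) \<in> adjrel G))"

definition connected_graph :: "('v, 'x) xgraph \<Rightarrow> bool" where
  "connected_graph G \<longleftrightarrow> (\<forall>u \<in> gV G. \<forall>w \<in> gV G. (u, w) \<in> (adjrel G)\<^sup>*)"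

definition phylo_tree :: "'x set \<Rightarrow> 'x option \<Rightarrow> ('v, 'x) xgraph \<Rightarrow> bool" where
  "phylo_tree X rt T \<longleftrightarrow>
     finite (gV T) \<and> gE T \<subseteq> gV T \<times> gV T \<and>
     (\<forall>(u, w) \<in> gE T. u \<noteq> w \<and> (w, u) \<notin> gE T) \<and>
     connected_graph T \<and> acyclic_graph T \<and>
     inj_on (glab T) X \<and>
     glab T ` X = {v \<in> gV T. deg T v \<le> 1} \<and>
     (\<forall>v \<in> gV T - glab T ` X. 3 \<le> deg T v) \<and>
     (case rt of None \<Rightarrow> True
      | Some \<rho> \<Rightarrow> \<rho> \<in> X \<and>
          (\<forall>v \<in> gV T. card {u. (u, v) \<in> gE T} = (if v = glab T \<rho> then 0 else 1)))"

definition is_xforest :: "'x set \<Rightarrow> 'x option \<Rightarrow> ('v, 'x) xgraph \<Rightarrow> bool" where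
  "is_xforest X rt F \<longleftrightarrow>
     finite X \<and>
     (\<exists>T. phylo_tree X rt T \<and> gV F \<subseteq> gV T \<and> gE F \<subseteq> gE T \<and>
          (\<forall>x \<in> X. glab F x = glab T x)) \<and>
     gE F \<subseteq> gV F \<times> gV F \<and> glab F ` X \<subseteq> gV F \<and>
     (\<forall>C \<in> comps F. \<exists>x \<in> X. glab F x \<in> C)"

definition del_vertex :: "('v, 'x) xgraph \<Rightarrow> 'v \<Rightarrow> ('v, 'x) xgraph" where
  "del_vertex G v = G\<lparr>gV := gV G - {v}, gE := {e \<in> gE G. fst e \<noteq> v \<and> snd e \<noteq> v}\<rparr>"

definition fc_step :: "'x set \<Rightarrow> 'x option \<Rightarrow> ('v, 'x) xgraph \<Rightarrow> ('v, 'x) xgraph \<Rightarrow> bool" where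
  "fc_step X rt G H \<longleftrightarrow> (\<exists>v \<in> gV G. v \<notin> glab G ` X \<and>
     ((deg G v < 2 \<and> H = del_vertex G v) \<or>
      (\<exists>u w. u \<noteq> w \<and> nbrs G v = {u, w} \<and>
         (case rt of None \<Rightarrow> True | Some _ \<Rightarrow> (u, v) \<in> gE G \<and> (v, w) \<in> gE G) \<and>
         H = (del_vertex G v)\<lparr>gE := insert (u, w) (gE (del_vertex G v))\<rparr>)))"

definition fc_reduced :: "'x set \<Rightarrow> 'x option \<Rightarrow> ('v, 'x) xgraph \<Rightarrow> bool" where
  "fc_reduced X rt G \<longleftrightarrow> \<not> (\<exists>H. fc_step X rt G H)"

definition xiso :: "'x set \<Rightarrow> 'x option \<Rightarrow> ('v, 'x) xgraph \<Rightarrow> ('v, 'x) xgraph \<Rightarrow> bool" where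
  "xiso X rt G H \<longleftrightarrow> (\<exists>f. bij_betw f (gV G) (gV H) \<and>
     (\<forall>x \<in> X. f (glab G x) = glab H x) \<and>
     (\<forall>u \<in> gV G. \<forall>w \<in> gV G.
        (case rt of None \<Rightarrow> ((u, w) \<in> adjrel G \<longleftrightarrow> (f u, f w) \<in> adjrel H)
         | Some _ \<Rightarrow> ((u, w) \<in> gE G \<longleftrightarrow> (f u, f w) \<in> gE H))))"

definition fc_iso :: "'x set \<Rightarrow> 'x option \<Rightarrow> ('v, 'x) xgraph \<Rightarrow> ('v, 'x) xgraph \<Rightarrow> bool" where
  "fc_iso X rt G H \<longleftrightarrow> (\<exists>G' H'. (fc_step X rt)\<^sup>*\<^sup>* G G' \<and> fc_reduced X rt G' \<and>
     (fc_step X rt)\<^sup>*\<^sup>* H H' \<and> fc_reduced X rt H' \<and> xiso X rt G' H')"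

definition subforest :: "'x set \<Rightarrow> 'x option \<Rightarrow> ('v, 'x) xgraph \<Rightarrow> ('v, 'x) xgraph \<Rightarrow> bool" where
  "subforest X rt F' F \<longleftrightarrow> (\<exists>E0 \<subseteq> gE F. fc_iso X rt F' (F\<lparr>gE := gE F - E0\<rparr>))"

definition agreement_forest ::
  "'x set \<Rightarrow> 'x option \<Rightarrow> ('v, 'x) xgraph set \<Rightarrow> ('v, 'x) xgraph \<Rightarrow> bool" where
  "agreement_forest X rt Fs F \<longleftrightarrow> is_xforest X rt F \<and> (\<forall>G \<in> Fs. subforest X rt F G)"

definition maximum_agreement_forest ::
  "'x set \<Rightarrow> 'x option \<Rightarrow> ('v, 'x) xgraph set \<Rightarrow> ('v, 'x) xgraph \<Rightarrow> bool" where
  "maximum_agreement_forest X rt Fs F \<longleftrightarrow> agreement_forest X rt Fs F \<and>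
     (\<forall>G. agreement_forest X rt Fs G \<longrightarrow> Ord F \<le> Ord G)"

definition maximal_agreement_forest ::
  "'x set \<Rightarrow> 'x option \<Rightarrow> ('v, 'x) xgraph \<Rightarrow> ('v, 'x) xgraph \<Rightarrow> ('v, 'x) xgraph \<Rightarrow> bool" where
  "maximal_agreement_forest X rt F1 F2 F \<longleftrightarrow> agreement_forest X rt {F1, F2} F \<and>
     \<not> (\<exists>F'. agreement_forest X rt {F1, F2} F' \<and> subforest X rt F F' \<and> Ord F' < Ord F)"

end

theory Submission
  imports Defs
begin


definition sc :: "('v \<times> 'v) set \<Rightarrow> ('v \<times> 'v) set" where
  "sc E = E \<union> E\<inverse>"

definition br :: "('v \<times> 'v) set \<Rightarrow> bool" where
  "br E \<longleftrightarrow> (\<forall>a b. (a,b)\<in>E \<longrightarrow> (a,b) \<notin> (sc (E - {(a,b),(b,a)}))\<^sup>*)"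

lemma sc_mono: "A \<subseteq> B \<Longrightarrow> sc A \<subseteq> sc B" by (auto simp: sc_def)

lemma sym_sc: "sym (sc E)" by (auto simp: sc_def sym_def)

lemma rt_sym: "(a,b) \<in> (sc E)\<^sup>* \<Longrightarrow> (b,a) \<in> (sc E)\<^sup>*"
  using sym_rtrancl[OF sym_sc[of E]] by (auto simp: sym_def)

lemma br_mono: "br E \<Longrightarrow> D \<subseteq> E \<Longrightarrow> br D"
  unfolding br_def
proof (intro allI impI notI)
  fix a b assume "\<forall>a b. (a,b)\<in>E \<longrightarrow> (a,b) \<notin> (sc (E - {(a,b),(b,a)}))\<^sup>*" "D \<subseteq> E" "(a,b)\<in>D"
    "(a,b) \<in> (sc (D - {(a,b),(b,a)}))\<^sup>*"
  moreover have "(sc (D - {(a,b),(b,a)}))\<^sup>* \<subseteq> (sc (E - {(a,b),(b,a)}))\<^sup>*"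
    by (rule rtrancl_mono, rule sc_mono) (use \<open>D \<subseteq> E\<close> in auto)
  ultimately show False by blast
qed

lemma no_tri:
  assumes br: "br E" and uv: "(u,v) \<in> sc E" and vw: "(v,w) \<in> sc E" and "u \<noteq> w"
  shows "(u,w) \<notin> (sc (E - {(u,v),(v,u)}))\<^sup>*"
proof
  assume uw: "(u,w) \<in> (sc (E - {(u,v),(v,u)}))\<^sup>*"
  have "(w,v) \<in> sc (E - {(u,v),(v,u)})" using vw \<open>u\<noteq>w\<close> by (auto simp: sc_def)
  with uw have uv2: "(u,v) \<in> (sc (E - {(u,v),(v,u)}))\<^sup>*" by auto
  from uv consider "(u,v) \<in> E" | "(v,u) \<in> E" by (auto simp: sc_def)
  then show False
  proof cases
    case 1 with br uv2 show False by (auto simp: br_def)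
  next
    case 2
    from rt_sym[OF uv2] have "(v,u) \<in> (sc (E - {(v,u),(u,v)}))\<^sup>*" by (simp add: insert_commute)
    with 2 br show False by (auto simp: br_def)
  qed
qed

lemma br_spr:
  assumes br: "br E" and uv: "(u,v) \<in> sc E" and vw: "(v,w) \<in> sc E" and uw: "u \<noteq> w"
    and "u \<noteq> v" "w \<noteq> v"
  defines "D \<equiv> {e\<in>E. fst e \<noteq> v \<and> snd e \<noteq> v}"
  shows "(u,w) \<notin> sc D" "br (insert (u,w) D)"
proof -
  have nt: "(u,w) \<notin> (sc (E - {(u,v),(v,u)}))\<^sup>*" by (rule no_tri[OF br uv vw uw])
  have DE: "D \<subseteq> E - {(u,v),(v,u)}" by (auto simp: D_def)
  show ucD: "(u,w) \<notin> sc D"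
  proof
    assume "(u,w) \<in> sc D"
    then have "(u,w) \<in> sc (E - {(u,v),(v,u)})" using sc_mono[OF DE] by auto
    with nt show False by auto
  qed
  show "br (insert (u,w) D)"
    unfolding br_def
  proof (intro allI impI notI)
    fix a b assume ab: "(a,b) \<in> insert (u,w) D"
      and p: "(a,b) \<in> (sc (insert (u,w) D - {(a,b),(b,a)}))\<^sup>*"
    show False
    proof (cases "(a,b) = (u,w)")
      case True
      then have "insert (u,w) D - {(a,b),(b,a)} \<subseteq> E - {(u,v),(v,u)}" using DE by auto
      from rtrancl_mono[OF sc_mono[OF this]] p True nt show False by auto
    next
      case False
      with ab have abD: "(a,b) \<in> D" by auto
      then have abE: "(a,b) \<in> E" and av: "a \<noteq> v" "b \<noteq> v" by (auto simp: D_def)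
      let ?R = "E - {(a,b),(b,a)}"
      have uvR: "(u,v) \<in> sc ?R" using uv av by (auto simp: sc_def)
      have vwR: "(v,w) \<in> sc ?R" using vw av by (auto simp: sc_def)
      have "sc (insert (u,w) D - {(a,b),(b,a)}) \<subseteq> (sc ?R)\<^sup>*"
      proof
        fix x assume "x \<in> sc (insert (u,w) D - {(a,b),(b,a)})"
        then consider "x = (u,w)" | "x = (w,u)" | "x \<in> sc ?R"
          by (auto simp: sc_def D_def)
        then show "x \<in> (sc ?R)\<^sup>*"
        proof cases
          case 1 then show ?thesis using uvR vwR by auto
        next
          case 2
          have "(w,v) \<in> sc ?R" "(v,u) \<in> sc ?R" using uvR vwR by (auto simp: sc_def)
          then show ?thesis using 2 by auto
        qed auto
      qed
      from rtrancl_subset_rtrancl[OF this] p have "(a,b) \<in> (sc ?R)\<^sup>*" by auto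
      with br abE show False by (auto simp: br_def)
    qed
  qed
qed



definition spr :: "('v,'x) xgraph \<Rightarrow> 'v \<Rightarrow> 'v \<Rightarrow> 'v \<Rightarrow> ('v,'x) xgraph" where
  "spr G v u w = (del_vertex G v)\<lparr>gE := insert (u,w) (gE (del_vertex G v))\<rparr>"

definition rc :: "'x option \<Rightarrow> ('v,'x) xgraph \<Rightarrow> 'v \<Rightarrow> 'v \<Rightarrow> 'v \<Rightarrow> bool" where
  "rc rt G u v w = (case rt of None \<Rightarrow> True | Some _ \<Rightarrow> (u, v) \<in> gE G \<and> (v, w) \<in> gE G)"

definition Inv :: "'x set \<Rightarrow> ('v,'x) xgraph \<Rightarrow> bool" where
  "Inv X G \<longleftrightarrow> finite (gV G) \<and> gE G \<subseteq> gV G \<times> gV G \<and> glab G ` X \<subseteq> gV G \<and>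
     (\<forall>a b. (a,b) \<in> gE G \<longrightarrow> a \<noteq> b \<and> (b,a) \<notin> gE G) \<and> br (gE G)"

lemma adjrel_sc: "adjrel G = sc (gE G)" by (auto simp: adjrel_def sc_def)
lemma nbrs_iff: "u \<in> nbrs G v \<longleftrightarrow> (u,v) \<in> sc (gE G)" by (auto simp: nbrs_def sc_def)

lemma del_simps[simp]: "gV (del_vertex G v) = gV G - {v}"
  "gE (del_vertex G v) = {e \<in> gE G. fst e \<noteq> v \<and> snd e \<noteq> v}"
  "glab (del_vertex G v) = glab G"
  by (auto simp: del_vertex_def)

lemma spr_simps[simp]: "gV (spr G v u w) = gV G - {v}"
  "gE (spr G v u w) = insert (u,w) {e \<in> gE G. fst e \<noteq> v \<and> snd e \<noteq> v}"
  "glab (spr G v u w) = glab G"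
  by (auto simp: spr_def)

lemma nbrs_del: "nbrs (del_vertex G v) y = (if y = v then {} else nbrs G y - {v})"
  by (auto simp: nbrs_def)

lemma nbrs_spr: "nbrs (spr G v u w) y =
   (if y = v then {} else nbrs G y - {v}) \<union> (if y = u then {w} else {}) \<union> (if y = w then {u} else {})"
  by (auto simp: nbrs_def)

lemma step_iff: "fc_step X rt G H \<longleftrightarrow> (\<exists>v\<in>gV G. v \<notin> glab G ` X \<and>
   ((deg G v < 2 \<and> H = del_vertex G v) \<or>
    (\<exists>u w. u \<noteq> w \<and> nbrs G v = {u,w} \<and> rc rt G u v w \<and> H = spr G v u w)))"
  unfolding fc_step_def spr_def rc_def by simp

lemma Inv_nbrs: "Inv X G \<Longrightarrow> nbrs G v \<subseteq> gV G"
  by (auto simp: Inv_def nbrs_def)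

lemma Inv_nbrs_fin: "Inv X G \<Longrightarrow> finite (nbrs G v)"
  using Inv_nbrs by (metis Inv_def finite_subset)

lemma Inv_nbrs_ne: "Inv X G \<Longrightarrow> u \<in> nbrs G v \<Longrightarrow> u \<noteq> v"
  by (auto simp: Inv_def nbrs_def)

lemma step_V: "fc_step X rt G H \<Longrightarrow> \<exists>v\<in>gV G. gV H = gV G - {v} \<and> glab H = glab G"
  unfolding step_iff by auto

lemma Inv_del: "Inv X G \<Longrightarrow> v \<notin> glab G ` X \<Longrightarrow> Inv X (del_vertex G v)"
  unfolding Inv_def by (auto intro: br_mono)

lemma Inv_spr:
  assumes I: "Inv X G" and v: "v \<notin> glab G ` X" and uw: "u \<noteq> w" and nb: "nbrs G v = {u,w}"
  shows "Inv X (spr G v u w)"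
proof -
  have uv: "(u,v) \<in> sc (gE G)" and wv: "(w,v) \<in> sc (gE G)" using nb nbrs_iff by fastforce+
  then have vw: "(v,w) \<in> sc (gE G)" by (auto simp: sc_def)
  have unv: "u \<noteq> v" "w \<noteq> v" using I nb Inv_nbrs_ne by fastforce+
  have uV: "u \<in> gV G" "w \<in> gV G" using I nb Inv_nbrs by fastforce+
  have br: "br (gE G)" using I by (simp add: Inv_def)
  note B = br_spr[OF br uv vw uw unv]
  let ?D = "{e \<in> gE G. fst e \<noteq> v \<and> snd e \<noteq> v}"
  have B1: "(u,w) \<notin> ?D" "(w,u) \<notin> ?D" using B(1) by (auto simp: sc_def)
  have EE: "\<forall>a b. (a,b) \<in> gE G \<longrightarrow> a \<noteq> b \<and> (b,a) \<notin> gE G" using I by (simp add: Inv_def)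
  have anti: "\<forall>a b. (a,b) \<in> insert (u,w) ?D \<longrightarrow> a \<noteq> b \<and> (b,a) \<notin> insert (u,w) ?D"
  proof (intro allI impI)
    fix a b assume ab: "(a,b) \<in> insert (u,w) ?D"
    show "a \<noteq> b \<and> (b,a) \<notin> insert (u,w) ?D"
    proof (cases "(a,b) = (u,w)")
      case True then show ?thesis using uw B1 by auto
    next
      case False
      then have abD: "(a,b) \<in> ?D" using ab by blast
      then have "a \<noteq> b" "(b,a) \<notin> gE G" using EE by auto
      moreover have "(b,a) \<noteq> (u,w)" using abD B1 by auto
      ultimately show ?thesis by auto
    qed
  qed
  have f: "finite (gV (spr G v u w))" using I by (simp add: Inv_def)
  have EV: "gE G \<subseteq> gV G \<times> gV G" "glab G ` X \<subseteq> gV G" using I by (simp_all add: Inv_def)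
  have e: "gE (spr G v u w) \<subseteq> gV (spr G v u w) \<times> gV (spr G v u w)"
    using EV(1) uV unv by auto
  have l: "glab (spr G v u w) ` X \<subseteq> gV (spr G v u w)" using EV(2) v by auto
  have a2: "\<forall>a b. (a,b) \<in> gE (spr G v u w) \<longrightarrow> a \<noteq> b \<and> (b,a) \<notin> gE (spr G v u w)"
    unfolding spr_simps(2) by (rule anti)
  have b2: "br (gE (spr G v u w))" unfolding spr_simps(2) by (rule B(2))
  show ?thesis unfolding Inv_def using f e l a2 b2 by blast
qed

lemma Inv_step: assumes I: "Inv X G" and s: "fc_step X rt G H" shows "Inv X H"
proof -
  obtain v where v: "v \<in> gV G" "v \<notin> glab G ` X" and
    c: "(deg G v < 2 \<and> H = del_vertex G v) \<or>
        (\<exists>u w. u \<noteq> w \<and> nbrs G v = {u,w} \<and> rc rt G u v w \<and> H = spr G v u w)"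
    using s unfolding step_iff by blast
  from c show ?thesis
  proof
    assume "deg G v < 2 \<and> H = del_vertex G v"
    then show ?thesis using Inv_del[OF I v(2)] by simp
  next
    assume "\<exists>u w. u \<noteq> w \<and> nbrs G v = {u,w} \<and> rc rt G u v w \<and> H = spr G v u w"
    then obtain u w where "u \<noteq> w" "nbrs G v = {u,w}" "H = spr G v u w" by blast
    then show ?thesis using Inv_spr[OF I v(2)] by simp
  qed
qed

lemma Inv_steps: "(fc_step X rt)\<^sup>*\<^sup>* G H \<Longrightarrow> Inv X G \<Longrightarrow> Inv X H"
  by (induction rule: rtranclp_induct) (auto intro: Inv_step)

lemma Inv_rm: "Inv X G \<Longrightarrow> Inv X (G\<lparr>gE := gE G - E\<rparr>)"
  unfolding Inv_def by (auto intro: br_mono)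

lemma step_card: "Inv X G \<Longrightarrow> fc_step X rt G H \<Longrightarrow> card (gV H) < card (gV G)"
  using step_V[of X rt G H] by (metis Inv_def card_Diff1_less)

lemma nf_exists: "Inv X G \<Longrightarrow> \<exists>R. (fc_step X rt)\<^sup>*\<^sup>* G R \<and> fc_reduced X rt R"
proof (induction "card (gV G)" arbitrary: G rule: less_induct)
  case less
  show ?case
  proof (cases "fc_reduced X rt G")
    case True then show ?thesis by auto
  next
    case False
    then obtain H where s: "fc_step X rt G H" by (auto simp: fc_reduced_def)
    from less(1)[OF step_card[OF less(2) s] Inv_step[OF less(2) s]]
    obtain R where "(fc_step X rt)\<^sup>*\<^sup>* H R" "fc_reduced X rt R" by auto
    with s show ?thesis by (meson converse_rtranclp_into_rtranclp)
  qed
qed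

lemma reduced_steps: "(fc_step X rt)\<^sup>*\<^sup>* R S \<Longrightarrow> fc_reduced X rt R \<Longrightarrow> S = R"
  by (induction rule: converse_rtranclp_induct) (auto simp: fc_reduced_def)

lemma dpath: "(x,y) \<in> r\<^sup>* \<Longrightarrow> \<exists>xs. xs \<noteq> [] \<and> hd xs = x \<and> last xs = y \<and> distinct xs \<and>
   (\<forall>i. Suc i < length xs \<longrightarrow> (xs!i, xs!Suc i) \<in> r)"
proof (induction rule: rtrancl_induct)
  case base then show ?case by (intro exI[of _ "[x]"]) auto
next
  case (step y z)
  then obtain xs where xs: "xs \<noteq> []" "hd xs = x" "last xs = y" "distinct xs"
    "\<forall>i. Suc i < length xs \<longrightarrow> (xs!i, xs!Suc i) \<in> r" by auto
  show ?case
  proof (cases "z \<in> set xs")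
    case True
    then obtain k where k: "k < length xs" "xs!k = z" by (auto simp: in_set_conv_nth)
    let ?ys = "take (Suc k) xs"
    have "?ys \<noteq> []" using xs(1) by simp
    moreover have "hd ?ys = x" using xs(1,2) by (cases xs) auto
    moreover have "last ?ys = z"
    proof -
      have L: "length ?ys = Suc k" using k by simp
      have "?ys \<noteq> []" using xs(1) by simp
      then have "last ?ys = ?ys ! k" using L by (simp add: last_conv_nth)
      then show ?thesis using k by simp
    qed
    moreover have "distinct ?ys" using xs(4) by simp
    moreover have "\<forall>i. Suc i < length ?ys \<longrightarrow> (?ys!i, ?ys!Suc i) \<in> r" using xs(5) by auto
    ultimately show ?thesis by blast
  next
    case False
    let ?ys = "xs @ [z]"
    have "\<forall>i. Suc i < length ?ys \<longrightarrow> (?ys!i, ?ys!Suc i) \<in> r"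
    proof (intro allI impI)
      fix i assume i: "Suc i < length ?ys"
      show "(?ys!i, ?ys!Suc i) \<in> r"
      proof (cases "Suc i < length xs")
        case True then show ?thesis using xs(5) by (simp add: nth_append)
      next
        case False
        then have "i = length xs - 1" using i by simp
        then show ?thesis using xs(1,3) step(2) False i by (simp add: nth_append last_conv_nth)
      qed
    qed
    then show ?thesis using xs False by (intro exI[of _ ?ys]) auto
  qed
qed

lemma phylo_br:
  assumes P: "phylo_tree X rt T"
  shows "br (gE T)"
  unfolding br_def
proof (intro allI impI notI)
  fix a b assume ab: "(a,b) \<in> gE T" and p: "(a,b) \<in> (sc (gE T - {(a,b),(b,a)}))\<^sup>*"
  let ?r = "sc (gE T - {(a,b),(b,a)})"
  have EV: "gE T \<subseteq> gV T \<times> gV T" and anb: "a \<noteq> b" and ac: "acyclic_graph T"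
    using P ab unfolding phylo_tree_def by auto
  obtain xs where xs: "xs \<noteq> []" "hd xs = a" "last xs = b" "distinct xs"
    "\<forall>i. Suc i < length xs \<longrightarrow> (xs!i, xs!Suc i) \<in> ?r" using dpath[OF p] by auto
  have rV: "?r \<subseteq> gV T \<times> gV T" using EV by (auto simp: sc_def)
  have radj: "?r \<subseteq> adjrel T" by (auto simp: adjrel_sc sc_def)
  have l2: "2 \<le> length xs"
  proof (rule ccontr)
    assume "\<not> 2 \<le> length xs"
    moreover have "length xs \<noteq> 0" using xs(1) by simp
    ultimately have "length xs = 1" by linarith
    then have "hd xs = last xs" by (cases xs) auto
    with xs anb show False by simp
  qed
  have l3: "3 \<le> length xs"
  proof (rule ccontr)
    assume "\<not> 3 \<le> length xs"
    with l2 have L: "length xs = 2" by simp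
    then have "xs!0 = a" "xs!1 = b" using xs(1,2,3) by (auto simp: hd_conv_nth last_conv_nth)
    moreover have "(xs!0, xs!Suc 0) \<in> ?r" using xs(5) L by auto
    ultimately show False by (auto simp: sc_def)
  qed
  have sV: "set xs \<subseteq> gV T"
  proof
    fix y assume "y \<in> set xs"
    then obtain i where i: "i < length xs" "xs!i = y" by (auto simp: in_set_conv_nth)
    show "y \<in> gV T"
    proof (cases "Suc i < length xs")
      case True then show ?thesis using xs(5) rV i by blast
    next
      case False
      then have "0 < i" "i = Suc (i - 1)" using i l2 by auto
      then have "(xs!(i-1), xs!i) \<in> ?r" using xs(5) i by (metis Suc_lessD)
      then show ?thesis using rV i by blast
    qed
  qed
  have cyc: "\<forall>i < length xs. (xs ! i, xs ! ((i + 1) mod length xs)) \<in> adjrel T"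
  proof (intro allI impI)
    fix i assume i: "i < length xs"
    show "(xs ! i, xs ! ((i + 1) mod length xs)) \<in> adjrel T"
    proof (cases "Suc i < length xs")
      case True then show ?thesis using xs(5) radj by auto
    next
      case False
      then have Si: "Suc i = length xs" using i by simp
      then have "i = length xs - 1" "(i+1) mod length xs = 0" by auto
      then have "xs!i = b" "xs!((i + 1) mod length xs) = a" using xs(1,2,3)
        by (auto simp: hd_conv_nth last_conv_nth)
      then show ?thesis using ab by (auto simp: adjrel_def)
    qed
  qed
  from ac l3 xs(4) sV cyc show False unfolding acyclic_graph_def by blast
qed

lemma xforest_Inv: "is_xforest X rt F \<Longrightarrow> Inv X F"
proof -
  assume F: "is_xforest X rt F"
  then obtain T where T: "phylo_tree X rt T" "gV F \<subseteq> gV T" "gE F \<subseteq> gE T"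
    and EV: "gE F \<subseteq> gV F \<times> gV F" "glab F ` X \<subseteq> gV F"
    unfolding is_xforest_def by auto
  have "finite (gV T)" using T(1) unfolding phylo_tree_def by (elim conjE)
  then have fin: "finite (gV F)" using T(2) by (rule finite_subset[rotated])
  have an: "\<forall>a b. (a,b) \<in> gE F \<longrightarrow> a \<noteq> b \<and> (b,a) \<notin> gE F"
  proof (intro allI impI)
    fix a b assume "(a,b) \<in> gE F"
    then have "(a,b) \<in> gE T" using T(3) by blast
    then have "a \<noteq> b \<and> (b,a) \<notin> gE T" using T(1) unfolding phylo_tree_def by fast
    then show "a \<noteq> b \<and> (b,a) \<notin> gE F" using T(3) by blast
  qed
  have "br (gE F)" using br_mono[OF phylo_br[OF T(1)] T(3)] .
  then show ?thesis using fin an EV unfolding Inv_def by blast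
qed



definition erel :: "'x option \<Rightarrow> ('v,'x) xgraph \<Rightarrow> ('v \<times> 'v) set" where
  "erel rt G = (case rt of None \<Rightarrow> adjrel G | Some _ \<Rightarrow> gE G)"

definition isoF :: "'x set \<Rightarrow> 'x option \<Rightarrow> ('v \<Rightarrow> 'v) \<Rightarrow> ('v,'x) xgraph \<Rightarrow> ('v,'x) xgraph \<Rightarrow> bool" where
  "isoF X rt f G H \<longleftrightarrow> bij_betw f (gV G) (gV H) \<and> (\<forall>x\<in>X. f (glab G x) = glab H x) \<and>
     (\<forall>u\<in>gV G. \<forall>w\<in>gV G. (u,w) \<in> erel rt G \<longleftrightarrow> (f u, f w) \<in> erel rt H)"

lemma xiso_iff: "xiso X rt G H \<longleftrightarrow> (\<exists>f. isoF X rt f G H)"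
  by (cases rt) (simp_all add: xiso_def isoF_def erel_def)

lemma xg_eq: "gV G = gV H \<Longrightarrow> gE G = gE H \<Longrightarrow> glab G = glab H \<Longrightarrow> (G::('v,'x) xgraph) = H"
  by (cases G, cases H) auto

lemma isoF_adj:
  assumes "isoF X rt f G H" "u \<in> gV G" "w \<in> gV G"
  shows "(u,w) \<in> adjrel G \<longleftrightarrow> (f u, f w) \<in> adjrel H"
proof (cases rt)
  case None then show ?thesis using assms by (simp add: isoF_def erel_def)
next
  case (Some r)
  then have "(u,w) \<in> gE G \<longleftrightarrow> (f u, f w) \<in> gE H" "(w,u) \<in> gE G \<longleftrightarrow> (f w, f u) \<in> gE H"
    using assms by (auto simp: isoF_def erel_def)
  then show ?thesis by (auto simp: adjrel_def)
qed

lemma isoF_inj: "isoF X rt f G H \<Longrightarrow> inj_on f (gV G)"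
  by (simp add: isoF_def bij_betw_def)

lemma isoF_nbrs:
  assumes I: "Inv X G" "Inv X H" and f: "isoF X rt f G H" and v: "v \<in> gV G"
  shows "nbrs H (f v) = f ` nbrs G v"
proof
  show "f ` nbrs G v \<subseteq> nbrs H (f v)"
  proof
    fix y assume "y \<in> f ` nbrs G v"
    then obtain u where u: "u \<in> nbrs G v" "y = f u" by auto
    then have uV: "u \<in> gV G" using Inv_nbrs[OF I(1)] by auto
    have "(u,v) \<in> adjrel G" using u by (simp add: nbrs_iff adjrel_sc)
    then have "(f u, f v) \<in> adjrel H" using isoF_adj[OF f uV v] by simp
    then show "y \<in> nbrs H (f v)" using u by (simp add: nbrs_iff adjrel_sc)
  qed
next
  show "nbrs H (f v) \<subseteq> f ` nbrs G v"
  proof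
    fix y assume y: "y \<in> nbrs H (f v)"
    then have "y \<in> gV H" using Inv_nbrs[OF I(2)] by auto
    moreover have "f ` gV G = gV H" using f by (simp add: isoF_def bij_betw_def)
    ultimately obtain u where u: "u \<in> gV G" "y = f u" by blast
    have "(f u, f v) \<in> adjrel H" using y u by (simp add: nbrs_iff adjrel_sc)
    then have "(u,v) \<in> adjrel G" using isoF_adj[OF f u(1) v] by simp
    then show "y \<in> f ` nbrs G v" using u by (auto simp: nbrs_iff adjrel_sc)
  qed
qed

lemma isoF_deg:
  assumes I: "Inv X G" "Inv X H" and f: "isoF X rt f G H" and v: "v \<in> gV G"
  shows "deg H (f v) = deg G v"
proof -
  have "inj_on f (nbrs G v)" using isoF_inj[OF f] Inv_nbrs[OF I(1)] inj_on_subset by blast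
  then show ?thesis unfolding deg_def isoF_nbrs[OF assms] by (simp add: card_image)
qed

lemma isoF_lab:
  assumes I: "Inv X G" and f: "isoF X rt f G H" and v: "v \<in> gV G"
  shows "f v \<in> glab H ` X \<longleftrightarrow> v \<in> glab G ` X"
proof
  assume "f v \<in> glab H ` X"
  then obtain x where x: "x \<in> X" "f v = glab H x" by auto
  then have "f v = f (glab G x)" using f by (simp add: isoF_def)
  moreover have "glab G x \<in> gV G" using I x by (auto simp: Inv_def)
  ultimately have "v = glab G x" using isoF_inj[OF f] v by (auto dest: inj_onD)
  then show "v \<in> glab G ` X" using x by auto
next
  assume "v \<in> glab G ` X"
  then show "f v \<in> glab H ` X" using f by (auto simp: isoF_def)
qed

lemma erel_del: "a \<noteq> v \<Longrightarrow> b \<noteq> v \<Longrightarrow> (a,b) \<in> erel rt (del_vertex G v) \<longleftrightarrow> (a,b) \<in> erel rt G"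
  by (cases rt) (auto simp: erel_def adjrel_def)

lemma erel_spr: "a \<noteq> v \<Longrightarrow> b \<noteq> v \<Longrightarrow> (a,b) \<in> erel rt (spr G v u w) \<longleftrightarrow>
   (a,b) \<in> erel rt G \<or> (case rt of None \<Rightarrow> (a,b) = (u,w) \<or> (a,b) = (w,u) | Some _ \<Rightarrow> (a,b) = (u,w))"
  by (cases rt) (auto simp: erel_def adjrel_def)

lemma bij_del: "bij_betw f A B \<Longrightarrow> v \<in> A \<Longrightarrow> bij_betw f (A - {v}) (B - {f v})"
  by (metis bij_betw_DiffI bij_betw_singletonI image_empty image_insert insert_subset
      bij_betw_imp_surj_on empty_subsetI image_eqI)

lemma isoF_del:
  assumes f: "isoF X rt f G H" and v: "v \<in> gV G"
  shows "isoF X rt f (del_vertex G v) (del_vertex H (f v))"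
proof -
  have b: "bij_betw f (gV G - {v}) (gV H - {f v})" using bij_del f v by (auto simp: isoF_def)
  have i: "inj_on f (gV G)" using isoF_inj[OF f] .
  show ?thesis unfolding isoF_def
  proof (intro conjI ballI)
    show "bij_betw f (gV (del_vertex G v)) (gV (del_vertex H (f v)))" using b by simp
  next
    fix x assume "x \<in> X" then show "f (glab (del_vertex G v) x) = glab (del_vertex H (f v)) x"
      using f by (simp add: isoF_def)
  next
    fix a b assume a: "a \<in> gV (del_vertex G v)" and b: "b \<in> gV (del_vertex G v)"
    then have "f a \<noteq> f v" "f b \<noteq> f v" using i v by (auto dest: inj_onD)
    then show "(a, b) \<in> erel rt (del_vertex G v) \<longleftrightarrow> (f a, f b) \<in> erel rt (del_vertex H (f v))"
      using a b f by (simp add: erel_del isoF_def)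
  qed
qed

lemma isoF_spr:
  assumes f: "isoF X rt f G H" and v: "v \<in> gV G" and uw: "u \<in> gV G" "w \<in> gV G"
  shows "isoF X rt f (spr G v u w) (spr H (f v) (f u) (f w))"
proof -
  have b: "bij_betw f (gV G - {v}) (gV H - {f v})" using bij_del f v by (auto simp: isoF_def)
  have i: "inj_on f (gV G)" using isoF_inj[OF f] .
  show ?thesis unfolding isoF_def
  proof (intro conjI ballI)
    show "bij_betw f (gV (spr G v u w)) (gV (spr H (f v) (f u) (f w)))" using b by simp
  next
    fix x assume "x \<in> X" then show "f (glab (spr G v u w) x) = glab (spr H (f v) (f u) (f w)) x"
      using f by (simp add: isoF_def)
  next
    fix a b assume a: "a \<in> gV (spr G v u w)" and b: "b \<in> gV (spr G v u w)"
    then have ne: "f a \<noteq> f v" "f b \<noteq> f v" using i v by (auto dest: inj_onD)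
    have aV: "a \<in> gV G" "b \<in> gV G" "a \<noteq> v" "b \<noteq> v" using a b by auto
    have e1: "(a,b) \<in> erel rt G \<longleftrightarrow> (f a, f b) \<in> erel rt H" using f aV by (simp add: isoF_def)
    have e2: "(a = u \<longleftrightarrow> f a = f u)" "(a = w \<longleftrightarrow> f a = f w)" "(b = u \<longleftrightarrow> f b = f u)" "(b = w \<longleftrightarrow> f b = f w)"
      using i aV uw by (auto dest: inj_onD)
    show "(a, b) \<in> erel rt (spr G v u w) \<longleftrightarrow> (f a, f b) \<in> erel rt (spr H (f v) (f u) (f w))"
      unfolding erel_spr[OF aV(3,4)] erel_spr[OF ne] using e1 e2 by (cases rt) auto
  qed
qed

lemma isoF_rc:
  assumes f: "isoF X rt f G H" and V: "u \<in> gV G" "v \<in> gV G" "w \<in> gV G"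
  shows "rc rt H (f u) (f v) (f w) \<longleftrightarrow> rc rt G u v w"
  using assms by (cases rt) (auto simp: rc_def isoF_def erel_def)

lemma sim1:
  assumes I: "Inv X G" "Inv X H" and f: "isoF X rt f G H" and s: "fc_step X rt G G'"
  shows "\<exists>H'. fc_step X rt H H' \<and> isoF X rt f G' H'"
proof -
  obtain v where v: "v \<in> gV G" "v \<notin> glab G ` X" and
    c: "(deg G v < 2 \<and> G' = del_vertex G v) \<or>
        (\<exists>u w. u \<noteq> w \<and> nbrs G v = {u,w} \<and> rc rt G u v w \<and> G' = spr G v u w)"
    using s unfolding step_iff by blast
  have fv: "f v \<in> gV H" "f v \<notin> glab H ` X" using v f isoF_lab[OF I(1) f v(1)]
    by (auto simp: isoF_def bij_betw_def)
  from c show ?thesis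
  proof
    assume d: "deg G v < 2 \<and> G' = del_vertex G v"
    have "fc_step X rt H (del_vertex H (f v))" unfolding step_iff
      using fv d isoF_deg[OF I f v(1)] by auto
    then show ?thesis using isoF_del[OF f v(1)] d by auto
  next
    assume "\<exists>u w. u \<noteq> w \<and> nbrs G v = {u,w} \<and> rc rt G u v w \<and> G' = spr G v u w"
    then obtain u w where d: "u \<noteq> w" "nbrs G v = {u,w}" "rc rt G u v w" "G' = spr G v u w" by blast
    have uV: "u \<in> gV G" "w \<in> gV G" using Inv_nbrs[OF I(1)] d(2) by auto
    have "f u \<noteq> f w" using d(1) uV isoF_inj[OF f] by (auto dest: inj_onD)
    moreover have "nbrs H (f v) = {f u, f w}" using isoF_nbrs[OF I f v(1)] d(2) by simp
    moreover have "rc rt H (f u) (f v) (f w)" using isoF_rc[OF f uV(1) v(1) uV(2)] d(3) by simp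
    ultimately have "fc_step X rt H (spr H (f v) (f u) (f w))" unfolding step_iff using fv by blast
    then show ?thesis using isoF_spr[OF f v(1) uV] d by auto
  qed
qed

lemma sim:
  assumes "(fc_step X rt)\<^sup>*\<^sup>* G G'" "Inv X G" "Inv X H" "isoF X rt f G H"
  shows "\<exists>H'. (fc_step X rt)\<^sup>*\<^sup>* H H' \<and> isoF X rt f G' H'"
  using assms
proof (induction rule: rtranclp_induct)
  case base then show ?case by auto
next
  case (step y z)
  then obtain H' where H': "(fc_step X rt)\<^sup>*\<^sup>* H H'" "isoF X rt f y H'" by auto
  have "Inv X y" using Inv_steps step by blast
  moreover have "Inv X H'" using Inv_steps H'(1) step(5) by blast
  ultimately obtain H'' where "fc_step X rt H' H''" "isoF X rt f z H''"
    using sim1 H'(2) step(2) by blast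
  then show ?case using H'(1) by (meson rtranclp.rtrancl_into_rtrancl)
qed

lemma xiso_refl: "xiso X rt G G"
  unfolding xiso_iff isoF_def by (intro exI[of _ id]) auto

lemma isoF_sym:
  assumes I: "Inv X G" and f: "isoF X rt f G H"
  shows "isoF X rt (inv_into (gV G) f) H G"
proof -
  let ?g = "inv_into (gV G) f"
  have bf: "bij_betw f (gV G) (gV H)" using f by (simp add: isoF_def)
  have bg: "bij_betw ?g (gV H) (gV G)" using bij_betw_inv_into[OF bf] .
  have i: "inj_on f (gV G)" using bf by (simp add: bij_betw_def)
  have sf: "f ` gV G = gV H" using bf by (simp add: bij_betw_def)
  show ?thesis unfolding isoF_def
  proof (intro conjI ballI)
    show "bij_betw ?g (gV H) (gV G)" using bg .
  next
    fix x assume x: "x \<in> X"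
    then have "glab G x \<in> gV G" using I by (auto simp: Inv_def)
    then show "?g (glab H x) = glab G x" using f x i by (metis isoF_def inv_into_f_f)
  next
    fix a b assume a: "a \<in> gV H" and b: "b \<in> gV H"
    have ga: "?g a \<in> gV G" "?g b \<in> gV G" using bg a b by (auto simp: bij_betw_def)
    have fg: "f (?g a) = a" "f (?g b) = b" using a b sf by (auto intro: f_inv_into_f)
    show "(a, b) \<in> erel rt H \<longleftrightarrow> (?g a, ?g b) \<in> erel rt G"
      using f ga fg unfolding isoF_def by metis
  qed
qed

lemma xiso_sym: "Inv X G \<Longrightarrow> xiso X rt G H \<Longrightarrow> xiso X rt H G"
  using isoF_sym xiso_iff by metis

lemma xiso_trans: "xiso X rt G H \<Longrightarrow> xiso X rt H K \<Longrightarrow> xiso X rt G K"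
proof -
  assume "xiso X rt G H" "xiso X rt H K"
  then obtain f g where f: "isoF X rt f G H" and g: "isoF X rt g H K" by (auto simp: xiso_iff)
  have "isoF X rt (g \<circ> f) G K" unfolding isoF_def
  proof (intro conjI ballI)
    show "bij_betw (g \<circ> f) (gV G) (gV K)" using f g bij_betw_trans by (auto simp: isoF_def)
  next
    fix x assume "x \<in> X" then show "(g \<circ> f) (glab G x) = glab K x" using f g by (simp add: isoF_def)
  next
    fix a b assume ab: "a \<in> gV G" "b \<in> gV G"
    then have "f a \<in> gV H" "f b \<in> gV H" using f by (auto simp: isoF_def bij_betw_def)
    then show "(a, b) \<in> erel rt G \<longleftrightarrow> ((g \<circ> f) a, (g \<circ> f) b) \<in> erel rt K"
      using f g ab by (simp add: isoF_def)
  qed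
  then show ?thesis by (auto simp: xiso_iff)
qed

lemma sim_red:
  assumes "(fc_step X rt)\<^sup>*\<^sup>* G G'" "fc_reduced X rt G'" "Inv X G" "Inv X H" "xiso X rt G H"
  shows "\<exists>H'. (fc_step X rt)\<^sup>*\<^sup>* H H' \<and> fc_reduced X rt H' \<and> xiso X rt G' H'"
proof -
  obtain f where f: "isoF X rt f G H" using assms(5) by (auto simp: xiso_iff)
  obtain H' where H': "(fc_step X rt)\<^sup>*\<^sup>* H H'" "isoF X rt f G' H'" using sim[OF assms(1,3,4) f] by auto
  have IG: "Inv X G'" using Inv_steps assms by blast
  have IH: "Inv X H'" using Inv_steps H'(1) assms(4) by blast
  have "fc_reduced X rt H'"
    unfolding fc_reduced_def
  proof
    assume "\<exists>K. fc_step X rt H' K"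
    then obtain K where "fc_step X rt H' K" by auto
    then obtain K' where "fc_step X rt G' K'" using sim1[OF IH IG isoF_sym[OF IG H'(2)]] by auto
    then show False using assms(2) by (auto simp: fc_reduced_def)
  qed
  then show ?thesis using H' xiso_iff by blast
qed



lemma step_delI: "v \<in> gV G \<Longrightarrow> v \<notin> glab G ` X \<Longrightarrow> deg G v < 2 \<Longrightarrow> fc_step X rt G (del_vertex G v)"
  unfolding step_iff by blast

lemma step_sprI: "v \<in> gV G \<Longrightarrow> v \<notin> glab G ` X \<Longrightarrow> u \<noteq> w \<Longrightarrow> nbrs G v = {u,w} \<Longrightarrow> rc rt G u v w
   \<Longrightarrow> fc_step X rt G (spr G v u w)"
  unfolding step_iff by blast

lemma deg_sub: "Inv X G \<Longrightarrow> nbrs H y \<subseteq> nbrs G v \<Longrightarrow> deg H y \<le> deg G v"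
  by (simp add: deg_def card_mono Inv_nbrs_fin)

lemma nbrs_sym: "u \<in> nbrs G v \<longleftrightarrow> v \<in> nbrs G u" by (auto simp: nbrs_def)

lemma deg1: "nbrs G v = {z} \<Longrightarrow> deg G v < 2" by (simp add: deg_def)

lemma deg_lt2_single:
  assumes I: "Inv X G" and d: "deg G v < 2" and y: "y \<in> nbrs G v"
  shows "nbrs G v = {y}"
proof -
  have fin: "finite (nbrs G v)" using Inv_nbrs_fin[OF I] .
  show ?thesis
  proof (rule ccontr)
    assume "nbrs G v \<noteq> {y}"
    then obtain z where "z \<in> nbrs G v" "z \<noteq> y" using y by blast
    then have "{y,z} \<subseteq> nbrs G v" "card {y,z} = 2" using y by auto
    then have "2 \<le> deg G v" unfolding deg_def using card_mono[OF fin] by metis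
    with d show False by simp
  qed
qed

lemma lc_dd:
  assumes I: "Inv X G" and v: "v1 \<in> gV G" "v1 \<notin> glab G ` X" "v2 \<in> gV G" "v2 \<notin> glab G ` X"
    and ne: "v1 \<noteq> v2" and d: "deg G v1 < 2" "deg G v2 < 2"
  shows "\<exists>K. (fc_step X rt)\<^sup>*\<^sup>* (del_vertex G v1) K \<and> (fc_step X rt)\<^sup>*\<^sup>* (del_vertex G v2) K"
proof -
  have "deg (del_vertex G v1) v2 \<le> deg G v2" by (rule deg_sub[OF I]) (auto simp: nbrs_del)
  then have s1: "fc_step X rt (del_vertex G v1) (del_vertex (del_vertex G v1) v2)"
    using v ne d by (intro step_delI) auto
  have "deg (del_vertex G v2) v1 \<le> deg G v1" by (rule deg_sub[OF I]) (auto simp: nbrs_del)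
  then have s2: "fc_step X rt (del_vertex G v2) (del_vertex (del_vertex G v2) v1)"
    using v ne d by (intro step_delI) auto
  have "del_vertex (del_vertex G v2) v1 = del_vertex (del_vertex G v1) v2"
    by (rule xg_eq) auto
  then show ?thesis using s1 s2 by (metis r_into_rtranclp)
qed

lemma lc_ds:
  assumes I: "Inv X G" and v: "v1 \<in> gV G" "v1 \<notin> glab G ` X" "v2 \<in> gV G" "v2 \<notin> glab G ` X"
    and ne: "v1 \<noteq> v2" and d: "deg G v1 < 2"
    and uw: "u \<noteq> w" "nbrs G v2 = {u,w}" "rc rt G u v2 w"
  shows "\<exists>K. (fc_step X rt)\<^sup>*\<^sup>* (del_vertex G v1) K \<and> (fc_step X rt)\<^sup>*\<^sup>* (spr G v2 u w) K"
proof (cases "v1 \<in> {u,w}")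
  case False
  have n1: "nbrs (del_vertex G v1) v2 = {u,w}" using uw False ne by (auto simp: nbrs_del)
  have r1: "rc rt (del_vertex G v1) u v2 w" using uw(3) False ne by (cases rt) (auto simp: rc_def)
  have s1: "fc_step X rt (del_vertex G v1) (spr (del_vertex G v1) v2 u w)"
    using v ne n1 r1 uw(1) by (intro step_sprI) auto
  have "deg (spr G v2 u w) v1 \<le> deg G v1" by (rule deg_sub[OF I]) (use False ne in \<open>auto simp: nbrs_spr\<close>)
  then have s2: "fc_step X rt (spr G v2 u w) (del_vertex (spr G v2 u w) v1)"
    using v ne d by (intro step_delI) auto
  have "del_vertex (spr G v2 u w) v1 = spr (del_vertex G v1) v2 u w"
    by (rule xg_eq) (use False in auto)
  then show ?thesis using s1 s2 by (metis r_into_rtranclp)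
next
  case True
  then obtain z where z: "nbrs G v2 = {v1, z}" "z \<noteq> v1" using uw by auto
  have "v2 \<in> nbrs G v1" using z(1) nbrs_sym by fast
  then have n1: "nbrs G v1 = {v2}" using deg_lt2_single[OF I d] by auto
  have "nbrs (del_vertex G v1) v2 = {z}" using z ne by (auto simp: nbrs_del)
  then have s1: "fc_step X rt (del_vertex G v1) (del_vertex (del_vertex G v1) v2)"
    using v ne by (intro step_delI) (auto intro: deg1)
  have "nbrs (spr G v2 u w) v1 = {z}" using n1 z True uw ne by (auto simp: nbrs_spr)
  then have s2: "fc_step X rt (spr G v2 u w) (del_vertex (spr G v2 u w) v1)"
    using v ne by (intro step_delI) (auto intro: deg1)
  have "del_vertex (spr G v2 u w) v1 = del_vertex (del_vertex G v1) v2"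
    by (rule xg_eq) (use True in auto)
  then show ?thesis using s1 s2 by (metis r_into_rtranclp)
qed

lemma step_far:
  assumes v: "v2 \<in> gV G" "v2 \<notin> glab G ` X" and ne: "v1 \<noteq> v2"
    and uw2: "u2 \<noteq> w2" "nbrs G v2 = {u2,w2}" "rc rt G u2 v2 w2"
    and far: "v1 \<notin> {u2,w2}" "v2 \<notin> {u1,w1}"
  shows "fc_step X rt (spr G v1 u1 w1) (spr (spr G v1 u1 w1) v2 u2 w2)"
proof -
  have n: "nbrs (spr G v1 u1 w1) v2 = {u2,w2}" using uw2 far ne by (auto simp: nbrs_spr)
  have r: "rc rt (spr G v1 u1 w1) u2 v2 w2" using uw2(3) far ne by (cases rt) (auto simp: rc_def)
  show ?thesis using v ne n r uw2(1) by (intro step_sprI) auto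
qed

lemma lc_ss_far:
  assumes v: "v1 \<in> gV G" "v1 \<notin> glab G ` X" "v2 \<in> gV G" "v2 \<notin> glab G ` X"
    and ne: "v1 \<noteq> v2"
    and uw1: "u1 \<noteq> w1" "nbrs G v1 = {u1,w1}" "rc rt G u1 v1 w1"
    and uw2: "u2 \<noteq> w2" "nbrs G v2 = {u2,w2}" "rc rt G u2 v2 w2"
    and far: "v2 \<notin> {u1,w1}"
  shows "\<exists>K. (fc_step X rt)\<^sup>*\<^sup>* (spr G v1 u1 w1) K \<and> (fc_step X rt)\<^sup>*\<^sup>* (spr G v2 u2 w2) K"
proof -
  have far2: "v1 \<notin> {u2,w2}" using far uw1(2) uw2(2) nbrs_sym by fast
  have s1: "fc_step X rt (spr G v1 u1 w1) (spr (spr G v1 u1 w1) v2 u2 w2)"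
    by (rule step_far[OF v(3,4) ne uw2 far2 far])
  have s2: "fc_step X rt (spr G v2 u2 w2) (spr (spr G v2 u2 w2) v1 u1 w1)"
    by (rule step_far[OF v(1,2) ne[symmetric] uw1 far far2])
  have "spr (spr G v2 u2 w2) v1 u1 w1 = spr (spr G v1 u1 w1) v2 u2 w2"
    by (rule xg_eq) (use far far2 in auto)
  then show ?thesis using s1 s2 by (metis r_into_rtranclp)
qed

lemma no_tri_nbrs:
  assumes I: "Inv X G" and a: "a \<in> nbrs G v1" and v2: "v2 \<in> nbrs G v1" and av2: "a \<in> nbrs G v2"
  shows False
proof -
  have av1: "a \<noteq> v1" "v2 \<noteq> v1" "a \<noteq> v2" using Inv_nbrs_ne[OF I] a v2 av2 by auto
  have br: "br (gE G)" using I by (simp add: Inv_def)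
  have "(a,v1) \<in> sc (gE G)" "(v1,v2) \<in> sc (gE G)" using a v2 nbrs_sym nbrs_iff by fast+
  from no_tri[OF br this av1(3)]
  have nt: "(a,v2) \<notin> (sc (gE G - {(a,v1),(v1,a)}))\<^sup>*" .
  have "(a,v2) \<in> sc (gE G)" using av2 nbrs_iff by fast
  then have "(a,v2) \<in> sc (gE G - {(a,v1),(v1,a)})" using av1 by (auto simp: sc_def)
  with nt show False by auto
qed

lemma lc_ss_adj:
  assumes I: "Inv X G" and v: "v1 \<in> gV G" "v1 \<notin> glab G ` X" "v2 \<in> gV G" "v2 \<notin> glab G ` X"
    and ne: "v1 \<noteq> v2"
    and n1: "nbrs G v1 = {a, v2}" "a \<noteq> v2" and n2: "nbrs G v2 = {v1, b}" "b \<noteq> v1"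
    and uw1: "{u1,w1} = {a,v2}" and uw2: "{u2,w2} = {v1,b}"
    and r1: "rc rt (spr G v1 u1 w1) a v2 b" and r2: "rc rt (spr G v2 u2 w2) a v1 b"
  shows "\<exists>K. (fc_step X rt)\<^sup>*\<^sup>* (spr G v1 u1 w1) K \<and> (fc_step X rt)\<^sup>*\<^sup>* (spr G v2 u2 w2) K"
proof -
  have ab: "a \<noteq> b"
  proof
    assume "a = b"
    then show False using no_tri_nbrs[OF I, of a v1 v2] n1 n2 nbrs_sym by fast
  qed
  have av: "a \<noteq> v1" "b \<noteq> v2" using n1 n2 Inv_nbrs_ne[OF I] by auto
  have nn1: "nbrs (spr G v1 u1 w1) v2 = {a,b}" using n1 n2 ne uw1 ab av by (auto simp: nbrs_spr doubleton_eq_iff)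
  have nn2: "nbrs (spr G v2 u2 w2) v1 = {a,b}" using n1 n2 ne uw2 ab av by (auto simp: nbrs_spr doubleton_eq_iff)
  have s1: "fc_step X rt (spr G v1 u1 w1) (spr (spr G v1 u1 w1) v2 a b)"
    using v ne nn1 r1 ab by (intro step_sprI) auto
  have s2: "fc_step X rt (spr G v2 u2 w2) (spr (spr G v2 u2 w2) v1 a b)"
    using v ne nn2 r2 ab by (intro step_sprI) auto
  have t1: "v2 = u1 \<or> v2 = w1" and t2: "v1 = u2 \<or> v1 = w2" using uw1 uw2 by auto
  have "spr (spr G v2 u2 w2) v1 a b = spr (spr G v1 u1 w1) v2 a b"
    by (rule xg_eq) (use t1 t2 in auto)
  then show ?thesis using s1 s2 by (metis r_into_rtranclp)
qed



lemma lc_ss: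
  assumes I: "Inv X G" and v: "v1 \<in> gV G" "v1 \<notin> glab G ` X" "v2 \<in> gV G" "v2 \<notin> glab G ` X"
    and ne: "v1 \<noteq> v2"
    and uw1: "u1 \<noteq> w1" "nbrs G v1 = {u1,w1}" "rc rt G u1 v1 w1"
    and uw2: "u2 \<noteq> w2" "nbrs G v2 = {u2,w2}" "rc rt G u2 v2 w2"
  shows "\<exists>K. (fc_step X rt)\<^sup>*\<^sup>* (spr G v1 u1 w1) K \<and> (fc_step X rt)\<^sup>*\<^sup>* (spr G v2 u2 w2) K"
proof (cases "v2 \<in> {u1,w1}")
  case False then show ?thesis using lc_ss_far[OF v ne uw1 uw2] by blast
next
  case True
  then have T2: "v1 \<in> {u2,w2}" using uw1(2) uw2(2) nbrs_sym by fast
  define a where "a = (if u1 = v2 then w1 else u1)"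
  define b where "b = (if u2 = v1 then w2 else u2)"
  have n1: "nbrs G v1 = {a, v2}" "a \<noteq> v2" "{u1,w1} = {a,v2}" using True uw1 by (auto simp: a_def)
  have n2: "nbrs G v2 = {v1, b}" "b \<noteq> v1" "{u2,w2} = {v1,b}" using T2 uw2 by (auto simp: b_def)
  have anti: "\<forall>x y. (x,y) \<in> gE G \<longrightarrow> x \<noteq> y \<and> (y,x) \<notin> gE G" using I by (simp add: Inv_def)
  show ?thesis
  proof (cases rt)
    case None
    have "rc rt (spr G v1 u1 w1) a v2 b" "rc rt (spr G v2 u2 w2) a v1 b" using None by (simp_all add: rc_def)
    then show ?thesis using lc_ss_adj[OF I v ne n1(1,2) n2(1,2) n1(3) n2(3)] by blast
  next
    case (Some r)
    have e1: "(u1,v1) \<in> gE G" "(v1,w1) \<in> gE G" using uw1(3) Some by (auto simp: rc_def)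
    have e2: "(u2,v2) \<in> gE G" "(v2,w2) \<in> gE G" using uw2(3) Some by (auto simp: rc_def)
    show ?thesis
    proof (cases "v2 = w1")
      case True
      have "u2 = v1"
      proof (rule ccontr)
        assume "u2 \<noteq> v1" then have "w2 = v1" using T2 by auto
        then show False using e1(2) e2(2) True anti by auto
      qed
      then have ab: "a = u1" "b = w2" using True uw1(1) uw2(1) by (auto simp: a_def b_def)
      have "u1 \<noteq> v2" "w2 \<noteq> v1" using True uw1(1) uw2(1) \<open>u2 = v1\<close> by auto
      then have "rc rt (spr G v1 u1 w1) a v2 b" "rc rt (spr G v2 u2 w2) a v1 b"
        using Some True \<open>u2 = v1\<close> ab e1 e2 ne by (auto simp: rc_def)
      then show ?thesis using lc_ss_adj[OF I v ne n1(1,2) n2(1,2) n1(3) n2(3)] by blast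
    next
      case False
      then have "v2 = u1" using \<open>v2 \<in> {u1,w1}\<close> by auto
      have "w2 = v1"
      proof (rule ccontr)
        assume "w2 \<noteq> v1" then have "u2 = v1" using T2 by auto
        then show False using e1(1) e2(1) \<open>v2 = u1\<close> anti by auto
      qed
      then have ab: "a = w1" "b = u2" using \<open>v2 = u1\<close> uw1(1) uw2(1) by (auto simp: a_def b_def)
      have m1: "nbrs G v2 = {b, v1}" "b \<noteq> v1" "{u2,w2} = {b,v1}" using n2 by auto
      have m2: "nbrs G v1 = {v2, a}" "a \<noteq> v2" "{u1,w1} = {v2,a}" using n1 by auto
      have "w1 \<noteq> v2" "u2 \<noteq> v1" using \<open>v2 = u1\<close> uw1(1) uw2(1) \<open>w2 = v1\<close> by auto
      then have "rc rt (spr G v2 u2 w2) b v1 a" "rc rt (spr G v1 u1 w1) b v2 a"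
        using Some \<open>v2 = u1\<close> \<open>w2 = v1\<close> ab e1 e2 ne by (auto simp: rc_def)
      then show ?thesis using lc_ss_adj[OF I v(3,4,1,2) ne[symmetric] m1(1,2) m2(1,2) m1(3) m2(3)] by blast
    qed
  qed
qed

lemma lc:
  assumes I: "Inv X G" and s1: "fc_step X rt G H1" and s2: "fc_step X rt G H2"
  shows "\<exists>K1 K2. (fc_step X rt)\<^sup>*\<^sup>* H1 K1 \<and> (fc_step X rt)\<^sup>*\<^sup>* H2 K2 \<and> xiso X rt K1 K2"
proof -
  have J: "\<exists>K. (fc_step X rt)\<^sup>*\<^sup>* H1 K \<and> (fc_step X rt)\<^sup>*\<^sup>* H2 K \<Longrightarrow> ?thesis"
    using xiso_refl by blast
  obtain v1 where v1: "v1 \<in> gV G" "v1 \<notin> glab G ` X" and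
    c1: "(deg G v1 < 2 \<and> H1 = del_vertex G v1) \<or>
        (\<exists>u w. u \<noteq> w \<and> nbrs G v1 = {u,w} \<and> rc rt G u v1 w \<and> H1 = spr G v1 u w)"
    using s1 unfolding step_iff by blast
  obtain v2 where v2: "v2 \<in> gV G" "v2 \<notin> glab G ` X" and
    c2: "(deg G v2 < 2 \<and> H2 = del_vertex G v2) \<or>
        (\<exists>u w. u \<noteq> w \<and> nbrs G v2 = {u,w} \<and> rc rt G u v2 w \<and> H2 = spr G v2 u w)"
    using s2 unfolding step_iff by blast
  have card2: "\<And>v u w. u \<noteq> w \<Longrightarrow> nbrs G v = {u,w} \<Longrightarrow> \<not> deg G v < 2"
    by (simp add: deg_def)
  show ?thesis
  proof (cases "v1 = v2")
    case True
    from c1 show ?thesis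
    proof
      assume d1: "deg G v1 < 2 \<and> H1 = del_vertex G v1"
      from c2 show ?thesis
      proof
        assume "deg G v2 < 2 \<and> H2 = del_vertex G v2"
        then show ?thesis using d1 True J by blast
      next
        assume "\<exists>u w. u \<noteq> w \<and> nbrs G v2 = {u,w} \<and> rc rt G u v2 w \<and> H2 = spr G v2 u w"
        then show ?thesis using d1 True card2 by blast
      qed
    next
      assume "\<exists>u w. u \<noteq> w \<and> nbrs G v1 = {u,w} \<and> rc rt G u v1 w \<and> H1 = spr G v1 u w"
      then obtain u1 w1 where d1: "u1 \<noteq> w1" "nbrs G v1 = {u1,w1}" "rc rt G u1 v1 w1" "H1 = spr G v1 u1 w1"
        by blast
      from c2 show ?thesis
      proof
        assume "deg G v2 < 2 \<and> H2 = del_vertex G v2"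
        then show ?thesis using d1 True card2 by blast
      next
        assume "\<exists>u w. u \<noteq> w \<and> nbrs G v2 = {u,w} \<and> rc rt G u v2 w \<and> H2 = spr G v2 u w"
        then obtain u2 w2 where d2: "u2 \<noteq> w2" "nbrs G v2 = {u2,w2}" "rc rt G u2 v2 w2" "H2 = spr G v2 u2 w2"
          by blast
        have eq: "{u1,w1} = {u2,w2}" using d1 d2 True by simp
        show ?thesis
        proof (cases rt)
          case None
          have "isoF X rt id H1 H2" unfolding isoF_def
          proof (intro conjI ballI)
            show "bij_betw id (gV H1) (gV H2)" using d1 d2 True by simp
          next
            fix x assume "x \<in> X" then show "id (glab H1 x) = glab H2 x" using d1 d2 by simp
          next
            fix a b assume "a \<in> gV H1" "b \<in> gV H1"
            then have "a \<noteq> v1" "b \<noteq> v1" using d1 by auto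
            then show "(a, b) \<in> erel rt H1 \<longleftrightarrow> (id a, id b) \<in> erel rt H2"
              using d1(4) d2(4) True None eq erel_spr[of a v1 b rt G] by (auto simp: doubleton_eq_iff)
          qed
          then show ?thesis using xiso_iff by blast
        next
          case (Some r)
          have anti: "\<forall>x y. (x,y) \<in> gE G \<longrightarrow> x \<noteq> y \<and> (y,x) \<notin> gE G" using I by (simp add: Inv_def)
          have "u1 = u2 \<and> w1 = w2"
          proof (rule ccontr)
            assume "\<not> (u1 = u2 \<and> w1 = w2)"
            then have "u1 = w2" "w1 = u2" using eq by (auto simp: doubleton_eq_iff)
            then show False using d1(3) d2(3) Some True anti by (auto simp: rc_def)
          qed
          then have "H1 = H2" using d1 d2 True by simp
          then show ?thesis using J by blast
        qed
      qed
    qed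
  next
    case False
    from c1 show ?thesis
    proof
      assume d1: "deg G v1 < 2 \<and> H1 = del_vertex G v1"
      from c2 show ?thesis
      proof
        assume "deg G v2 < 2 \<and> H2 = del_vertex G v2"
        then show ?thesis using lc_dd[OF I v1 v2 False] d1 J by blast
      next
        assume "\<exists>u w. u \<noteq> w \<and> nbrs G v2 = {u,w} \<and> rc rt G u v2 w \<and> H2 = spr G v2 u w"
        then obtain u2 w2 where d2: "u2 \<noteq> w2" "nbrs G v2 = {u2,w2}" "rc rt G u2 v2 w2" "H2 = spr G v2 u2 w2"
          by blast
        show ?thesis using lc_ds[OF I v1 v2 False _ d2(1,2,3)] d1 d2(4) J by blast
      qed
    next
      assume "\<exists>u w. u \<noteq> w \<and> nbrs G v1 = {u,w} \<and> rc rt G u v1 w \<and> H1 = spr G v1 u w"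
      then obtain u1 w1 where d1: "u1 \<noteq> w1" "nbrs G v1 = {u1,w1}" "rc rt G u1 v1 w1" "H1 = spr G v1 u1 w1"
        by blast
      from c2 show ?thesis
      proof
        assume d2: "deg G v2 < 2 \<and> H2 = del_vertex G v2"
        show ?thesis using lc_ds[OF I v2 v1 _ _ d1(1,2,3)] False d1(4) d2 J by blast
      next
        assume "\<exists>u w. u \<noteq> w \<and> nbrs G v2 = {u,w} \<and> rc rt G u v2 w \<and> H2 = spr G v2 u w"
        then obtain u2 w2 where d2: "u2 \<noteq> w2" "nbrs G v2 = {u2,w2}" "rc rt G u2 v2 w2" "H2 = spr G v2 u2 w2"
          by blast
        show ?thesis using lc_ss[OF I v1 v2 False d1(1,2,3) d2(1,2,3)] d1(4) d2(4) J by blast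
      qed
    qed
  qed
qed

lemma conf:
  assumes "Inv X G" "(fc_step X rt)\<^sup>*\<^sup>* G R1" "fc_reduced X rt R1"
    "(fc_step X rt)\<^sup>*\<^sup>* G R2" "fc_reduced X rt R2"
  shows "xiso X rt R1 R2"
  using assms
proof (induction "card (gV G)" arbitrary: G R1 R2 rule: less_induct)
  case less
  show ?case
  proof (cases "fc_reduced X rt G")
    case True
    then have "R1 = G" "R2 = G" using reduced_steps less by blast+
    then show ?thesis using xiso_refl by simp
  next
    case False
    have ex: "\<exists>H. fc_step X rt G H \<and> (fc_step X rt)\<^sup>*\<^sup>* H R"
      if "(fc_step X rt)\<^sup>*\<^sup>* G R" "fc_reduced X rt R" for R
      using that False by (cases rule: converse_rtranclpE) auto
    obtain H1 where H1: "fc_step X rt G H1" "(fc_step X rt)\<^sup>*\<^sup>* H1 R1" using ex less by blast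
    obtain H2 where H2: "fc_step X rt G H2" "(fc_step X rt)\<^sup>*\<^sup>* H2 R2" using ex less by blast
    obtain K1 K2 where K: "(fc_step X rt)\<^sup>*\<^sup>* H1 K1" "(fc_step X rt)\<^sup>*\<^sup>* H2 K2" "xiso X rt K1 K2"
      using lc[OF less(2) H1(1) H2(1)] by blast
    have IH1: "Inv X H1" "Inv X H2" using Inv_step less(2) H1 H2 by blast+
    have IK: "Inv X K1" "Inv X K2" using Inv_steps K IH1 by blast+
    obtain N1 where N1: "(fc_step X rt)\<^sup>*\<^sup>* K1 N1" "fc_reduced X rt N1" using nf_exists[OF IK(1)] by blast
    obtain N2 where N2: "(fc_step X rt)\<^sup>*\<^sup>* K2 N2" "fc_reduced X rt N2" "xiso X rt N1 N2"
      using sim_red[OF N1 IK K(3)] by blast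
    have "xiso X rt R1 N1"
      using less(1)[OF step_card[OF less(2) H1(1)] IH1(1) H1(2) less(4)] K(1) N1 by (meson rtranclp_trans)
    moreover have "xiso X rt R2 N2"
      using less(1)[OF step_card[OF less(2) H2(1)] IH1(2) H2(2) less(6)] K(2) N2 by (meson rtranclp_trans)
    moreover have "Inv X R2" using Inv_steps H2(2) IH1(2) by blast
    ultimately show ?thesis using N2(3) xiso_sym xiso_trans by metis
  qed
qed



lemma rm_simps[simp]: "gV (G\<lparr>gE := E\<rparr>) = gV G" "gE (G\<lparr>gE := E\<rparr>) = E" "glab (G\<lparr>gE := E\<rparr>) = glab G"
  by simp_all

lemma Inv_anti: "Inv X G \<Longrightarrow> (a,b) \<in> gE G \<Longrightarrow> a \<noteq> b \<and> (b,a) \<notin> gE G"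
  by (simp add: Inv_def)

lemma uw_not_edge:
  assumes I: "Inv X G" and n: "nbrs G v = {u,w}" "u \<noteq> w"
  shows "(u,w) \<notin> gE G"
proof
  assume "(u,w) \<in> gE G"
  then have "u \<in> nbrs G w" by (simp add: nbrs_def)
  then show False using no_tri_nbrs[OF I, of u v w] n by auto
qed

lemma del_step:
  assumes I: "Inv X B" and s: "fc_step X rt B B1" and E: "E \<subseteq> gE B"
  shows "\<exists>E'\<subseteq>gE B1. fc_step X rt (B\<lparr>gE := gE B - E\<rparr>) (B1\<lparr>gE := gE B1 - E'\<rparr>)"
proof -
  obtain v where v: "v \<in> gV B" "v \<notin> glab B ` X" and
    c: "(deg B v < 2 \<and> B1 = del_vertex B v) \<or>
        (\<exists>u w. u \<noteq> w \<and> nbrs B v = {u,w} \<and> rc rt B u v w \<and> B1 = spr B v u w)"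
    using s unfolding step_iff by blast
  let ?BE = "B\<lparr>gE := gE B - E\<rparr>"
  have vv: "v \<in> gV ?BE" "v \<notin> glab ?BE ` X" using v by auto
  have nsub: "nbrs ?BE v \<subseteq> nbrs B v" by (auto simp: nbrs_def)
  from c show ?thesis
  proof
    assume d: "deg B v < 2 \<and> B1 = del_vertex B v"
    have "deg ?BE v \<le> deg B v" by (rule deg_sub[OF I nsub])
    then have st: "fc_step X rt ?BE (del_vertex ?BE v)" using vv d by (intro step_delI) auto
    have "del_vertex ?BE v = B1\<lparr>gE := gE B1 - E \<inter> gE B1\<rparr>" using d by (intro xg_eq) auto
    then show ?thesis using st by (intro exI[of _ "E \<inter> gE B1"]) auto
  next
    assume "\<exists>u w. u \<noteq> w \<and> nbrs B v = {u,w} \<and> rc rt B u v w \<and> B1 = spr B v u w"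
    then obtain u w where d: "u \<noteq> w" "nbrs B v = {u,w}" "rc rt B u v w" "B1 = spr B v u w" by blast
    have uwn: "(u,w) \<notin> gE B" using uw_not_edge[OF I d(2,1)] .
    let ?T = "{e \<in> gE B. fst e = v \<or> snd e = v}"
    show ?thesis
    proof (cases "E \<inter> ?T = {}")
      case True
      have n: "nbrs ?BE v = {u,w}"
      proof
        show "nbrs ?BE v \<subseteq> {u,w}" using nsub d(2) by simp
        show "{u,w} \<subseteq> nbrs ?BE v"
        proof
          fix y assume "y \<in> {u,w}"
          then have "(y,v) \<in> gE B \<or> (v,y) \<in> gE B" using d(2) by (auto simp: nbrs_def)
          then show "y \<in> nbrs ?BE v" using True by (auto simp: nbrs_def)
        qed
      qed
      have r: "rc rt ?BE u v w" using d(3) True by (cases rt) (auto simp: rc_def)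
      have st: "fc_step X rt ?BE (spr ?BE v u w)" using vv d(1) n r by (intro step_sprI) auto
      have "spr ?BE v u w = B1\<lparr>gE := gE B1 - E\<rparr>" using d(4) True uwn E by (intro xg_eq) auto
      moreover have "E \<subseteq> gE B1" using d(4) True E by auto
      ultimately show ?thesis using st by (intro exI[of _ "E"]) simp
    next
      case False
      then obtain e where e: "e \<in> E" "e \<in> ?T" by blast
      obtain y where y: "e = (y,v) \<or> e = (v,y)" using e(2) by (cases e) auto
      have yn: "y \<in> nbrs B v" using y e E by (auto simp: nbrs_def)
      have "y \<notin> nbrs ?BE v"
      proof
        assume "y \<in> nbrs ?BE v"
        then have "(y,v) \<in> gE B - E \<or> (v,y) \<in> gE B - E" by (simp add: nbrs_def)
        then show False using y e(1) E Inv_anti[OF I] by blast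
      qed
      then have "nbrs ?BE v \<subseteq> {u,w} - {y}" using nsub d(2) by auto
      moreover have "card ({u,w} - {y}) \<le> 1"
      proof -
        have "card ({u,w} - {y}) = card {u,w} - 1" using yn d(2) by (simp add: card_Diff_singleton)
        moreover have "card {u,w} \<le> 2" by (simp add: card_insert_if)
        ultimately show ?thesis by linarith
      qed
      ultimately have "card (nbrs ?BE v) \<le> 1" using card_mono[of "{u,w} - {y}" "nbrs ?BE v"] by fastforce
      then have "deg ?BE v < 2" unfolding deg_def by simp
      then have st: "fc_step X rt ?BE (del_vertex ?BE v)" using vv by (intro step_delI) auto
      let ?E' = "(E - ?T) \<union> {(u,w)}"
      have "del_vertex ?BE v = B1\<lparr>gE := gE B1 - ?E'\<rparr>" using d(4) uwn by (intro xg_eq) auto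
      moreover have "?E' \<subseteq> gE B1" using d(4) E by auto
      ultimately show ?thesis using st by (intro exI[of _ "?E'"]) simp
    qed
  qed
qed

lemma del_steps:
  assumes "(fc_step X rt)\<^sup>*\<^sup>* B B'" "Inv X B"
  shows "\<forall>E. E \<subseteq> gE B \<longrightarrow> (\<exists>E'\<subseteq>gE B'. (fc_step X rt)\<^sup>*\<^sup>* (B\<lparr>gE := gE B - E\<rparr>) (B'\<lparr>gE := gE B' - E'\<rparr>))"
  using assms(1)
proof (induction rule: rtranclp_induct)
  case base then show ?case by blast
next
  case (step y z)
  show ?case
  proof (intro allI impI)
    fix E assume E: "E \<subseteq> gE B"
    obtain E1 where E1: "E1 \<subseteq> gE y" "(fc_step X rt)\<^sup>*\<^sup>* (B\<lparr>gE := gE B - E\<rparr>) (y\<lparr>gE := gE y - E1\<rparr>)"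
      using step(3) E by blast
    have Iy: "Inv X y" using Inv_steps step(1) assms(2) by blast
    obtain E2 where "E2 \<subseteq> gE z" "fc_step X rt (y\<lparr>gE := gE y - E1\<rparr>) (z\<lparr>gE := gE z - E2\<rparr>)"
      using del_step[OF Iy step(2) E1(1)] by blast
    then show "\<exists>E'\<subseteq>gE z. (fc_step X rt)\<^sup>*\<^sup>* (B\<lparr>gE := gE B - E\<rparr>) (z\<lparr>gE := gE z - E'\<rparr>)"
      using E1(2) by (meson rtranclp.rtrancl_into_rtrancl)
  qed
qed

lemma back_step:
  assumes I: "Inv X B" and s: "fc_step X rt B B1" and E': "E' \<subseteq> gE B1"
  shows "\<exists>E\<subseteq>gE B. fc_step X rt (B\<lparr>gE := gE B - E\<rparr>) (B1\<lparr>gE := gE B1 - E'\<rparr>)"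
proof -
  obtain v where v: "v \<in> gV B" "v \<notin> glab B ` X" and
    c: "(deg B v < 2 \<and> B1 = del_vertex B v) \<or>
        (\<exists>u w. u \<noteq> w \<and> nbrs B v = {u,w} \<and> rc rt B u v w \<and> B1 = spr B v u w)"
    using s unfolding step_iff by blast
  from c show ?thesis
  proof
    assume d: "deg B v < 2 \<and> B1 = del_vertex B v"
    let ?BE = "B\<lparr>gE := gE B - E'\<rparr>"
    have "deg ?BE v \<le> deg B v" by (rule deg_sub[OF I]) (auto simp: nbrs_def)
    then have st: "fc_step X rt ?BE (del_vertex ?BE v)" using v d by (intro step_delI) auto
    have "del_vertex ?BE v = B1\<lparr>gE := gE B1 - E'\<rparr>" using d by (intro xg_eq) auto
    moreover have "E' \<subseteq> gE B" using d E' by auto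
    ultimately show ?thesis using st by (intro exI[of _ "E'"]) simp
  next
    assume "\<exists>u w. u \<noteq> w \<and> nbrs B v = {u,w} \<and> rc rt B u v w \<and> B1 = spr B v u w"
    then obtain u w where d: "u \<noteq> w" "nbrs B v = {u,w}" "rc rt B u v w" "B1 = spr B v u w" by blast
    have uwn: "(u,w) \<notin> gE B" using uw_not_edge[OF I d(2,1)] .
    show ?thesis
    proof (cases "(u,w) \<in> E'")
      case False
      let ?BE = "B\<lparr>gE := gE B - E'\<rparr>"
      have ET: "\<forall>e\<in>E'. fst e \<noteq> v \<and> snd e \<noteq> v" using E' d(4) False by auto
      have n: "nbrs ?BE v = {u,w}"
      proof
        show "nbrs ?BE v \<subseteq> {u,w}" using d(2) by (auto simp: nbrs_def)
        show "{u,w} \<subseteq> nbrs ?BE v"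
        proof
          fix y assume "y \<in> {u,w}"
          then have "(y,v) \<in> gE B \<or> (v,y) \<in> gE B" using d(2) by (auto simp: nbrs_def)
          then show "y \<in> nbrs ?BE v" using ET by (auto simp: nbrs_def)
        qed
      qed
      have r: "rc rt ?BE u v w" using d(3) ET by (cases rt) (auto simp: rc_def)
      have st: "fc_step X rt ?BE (spr ?BE v u w)" using v d(1) n r by (intro step_sprI) auto
      have "spr ?BE v u w = B1\<lparr>gE := gE B1 - E'\<rparr>" using d(4) False ET by (intro xg_eq) auto
      moreover have "E' \<subseteq> gE B" using d(4) E' False by auto
      ultimately show ?thesis using st by (intro exI[of _ "E'"]) simp
    next
      case True
      have "u \<in> nbrs B v" using d(2) by auto
      then obtain eu where eu: "eu \<in> gE B" "eu = (u,v) \<or> eu = (v,u)" by (auto simp: nbrs_def)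
      let ?E = "(E' - {(u,w)}) \<union> {eu}"
      let ?BE = "B\<lparr>gE := gE B - ?E\<rparr>"
      have "u \<notin> nbrs ?BE v"
      proof
        assume "u \<in> nbrs ?BE v"
        then have "(u,v) \<in> gE B - ?E \<or> (v,u) \<in> gE B - ?E" by (simp add: nbrs_def)
        then show False using eu Inv_anti[OF I] by blast
      qed
      moreover have "nbrs ?BE v \<subseteq> nbrs B v" by (auto simp: nbrs_def)
      ultimately have "nbrs ?BE v \<subseteq> {w}" using d(2) by auto
      then have "card (nbrs ?BE v) \<le> 1" using card_mono[of "{w}" "nbrs ?BE v"] by fastforce
      then have "deg ?BE v < 2" unfolding deg_def by simp
      then have st: "fc_step X rt ?BE (del_vertex ?BE v)" using v by (intro step_delI) auto
      have "del_vertex ?BE v = B1\<lparr>gE := gE B1 - E'\<rparr>" using d(4) True uwn eu by (intro xg_eq) auto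
      moreover have "?E \<subseteq> gE B" using d(4) E' eu by auto
      ultimately show ?thesis using st by (intro exI[of _ "?E"]) simp
    qed
  qed
qed

lemma back_steps:
  assumes "(fc_step X rt)\<^sup>*\<^sup>* B B'" "Inv X B"
  shows "\<forall>E'. E' \<subseteq> gE B' \<longrightarrow> (\<exists>E\<subseteq>gE B. (fc_step X rt)\<^sup>*\<^sup>* (B\<lparr>gE := gE B - E\<rparr>) (B'\<lparr>gE := gE B' - E'\<rparr>))"
  using assms(1)
proof (induction rule: rtranclp_induct)
  case base then show ?case by blast
next
  case (step y z)
  show ?case
  proof (intro allI impI)
    fix E' assume E': "E' \<subseteq> gE z"
    have Iy: "Inv X y" using Inv_steps step(1) assms(2) by blast
    obtain E1 where E1: "E1 \<subseteq> gE y" "fc_step X rt (y\<lparr>gE := gE y - E1\<rparr>) (z\<lparr>gE := gE z - E'\<rparr>)"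
      using back_step[OF Iy step(2) E'] by blast
    obtain E where "E \<subseteq> gE B" "(fc_step X rt)\<^sup>*\<^sup>* (B\<lparr>gE := gE B - E\<rparr>) (y\<lparr>gE := gE y - E1\<rparr>)"
      using step(3) E1(1) by blast
    then show "\<exists>E\<subseteq>gE B. (fc_step X rt)\<^sup>*\<^sup>* (B\<lparr>gE := gE B - E\<rparr>) (z\<lparr>gE := gE z - E'\<rparr>)"
      using E1(2) by (meson rtranclp.rtrancl_into_rtrancl)
  qed
qed

lemma erel_rm:
  assumes I: "Inv X G" and E: "E \<subseteq> gE G"
  shows "(a,b) \<in> erel rt (G\<lparr>gE := gE G - E\<rparr>) \<longleftrightarrow> (a,b) \<in> erel rt G \<and> (a,b) \<notin> E \<and> (b,a) \<notin> E"
  using Inv_anti[OF I] E by (cases rt) (auto simp: erel_def adjrel_def)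

lemma erel_adj: "(a,b) \<in> erel rt G \<Longrightarrow> (a,b) \<in> adjrel G"
  by (cases rt) (auto simp: erel_def adjrel_def)

lemma iso_rm:
  assumes IG: "Inv X G" and IH: "Inv X H" and f: "isoF X rt f G H" and E: "E \<subseteq> gE G"
  shows "\<exists>E'\<subseteq>gE H. isoF X rt f (G\<lparr>gE := gE G - E\<rparr>) (H\<lparr>gE := gE H - E'\<rparr>)"
proof -
  define E' where "E' = {(x,y) \<in> gE H. \<exists>(c,d)\<in>E. (x = f c \<and> y = f d) \<or> (x = f d \<and> y = f c)}"
  have E'H: "E' \<subseteq> gE H" by (auto simp: E'_def)
  have EV: "gE G \<subseteq> gV G \<times> gV G" using IG by (simp add: Inv_def)
  have inj: "inj_on f (gV G)" using isoF_inj[OF f] .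
  have key: "((f a, f b) \<in> E' \<or> (f b, f a) \<in> E') \<longleftrightarrow> ((a,b) \<in> E \<or> (b,a) \<in> E)"
    if ab: "a \<in> gV G" "b \<in> gV G" "(a,b) \<in> erel rt G" for a b
  proof
    assume "(f a, f b) \<in> E' \<or> (f b, f a) \<in> E'"
    then obtain c d where cd: "(c,d) \<in> E" "(f a = f c \<and> f b = f d) \<or> (f a = f d \<and> f b = f c)"
      unfolding E'_def by auto
    have "c \<in> gV G" "d \<in> gV G" using cd(1) E EV by auto
    then have "(a = c \<and> b = d) \<or> (a = d \<and> b = c)" using cd(2) ab inj by (auto dest: inj_onD)
    then show "(a,b) \<in> E \<or> (b,a) \<in> E" using cd(1) by auto
  next
    assume P: "(a,b) \<in> E \<or> (b,a) \<in> E"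
    have "(f a, f b) \<in> adjrel H" using erel_adj[OF ab(3)] isoF_adj[OF f ab(1,2)] by simp
    then have "(f a, f b) \<in> gE H \<or> (f b, f a) \<in> gE H" by (simp add: adjrel_def)
    then show "(f a, f b) \<in> E' \<or> (f b, f a) \<in> E'" using P unfolding E'_def by blast
  qed
  have "isoF X rt f (G\<lparr>gE := gE G - E\<rparr>) (H\<lparr>gE := gE H - E'\<rparr>)"
    unfolding isoF_def
  proof (intro conjI ballI)
    show "bij_betw f (gV (G\<lparr>gE := gE G - E\<rparr>)) (gV (H\<lparr>gE := gE H - E'\<rparr>))" using f by (simp add: isoF_def)
  next
    fix x assume "x \<in> X" then show "f (glab (G\<lparr>gE := gE G - E\<rparr>) x) = glab (H\<lparr>gE := gE H - E'\<rparr>) x"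
      using f by (simp add: isoF_def)
  next
    fix a b assume ab: "a \<in> gV (G\<lparr>gE := gE G - E\<rparr>)" "b \<in> gV (G\<lparr>gE := gE G - E\<rparr>)"
    then have ab': "a \<in> gV G" "b \<in> gV G" by auto
    have e: "(a,b) \<in> erel rt G \<longleftrightarrow> (f a, f b) \<in> erel rt H" using f ab' by (simp add: isoF_def)
    show "(a, b) \<in> erel rt (G\<lparr>gE := gE G - E\<rparr>) \<longleftrightarrow> (f a, f b) \<in> erel rt (H\<lparr>gE := gE H - E'\<rparr>)"
      unfolding erel_rm[OF IG E] erel_rm[OF IH E'H] using e key[OF ab'] by blast
  qed
  then show ?thesis using E'H by blast
qed

lemma rm_rm: "(C\<lparr>gE := gE C - E1\<rparr>)\<lparr>gE := gE (C\<lparr>gE := gE C - E1\<rparr>) - E3\<rparr> = C\<lparr>gE := gE C - (E1 \<union> E3)\<rparr>"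
proof -
  have "gE C - E1 - E3 = gE C - (E1 \<union> E3)" by blast
  then show ?thesis by simp
qed

lemma sub_trans:
  assumes IB: "Inv X B" and IC: "Inv X C"
    and AB: "subforest X rt A B" and BC: "subforest X rt B C"
  shows "subforest X rt A C"
proof -
  obtain E0 A' P where E0: "E0 \<subseteq> gE B" "(fc_step X rt)\<^sup>*\<^sup>* A A'" "fc_reduced X rt A'"
    "(fc_step X rt)\<^sup>*\<^sup>* (B\<lparr>gE := gE B - E0\<rparr>) P" "fc_reduced X rt P" "xiso X rt A' P"
    using AB unfolding subforest_def fc_iso_def by blast
  obtain E1 B' Q where E1: "E1 \<subseteq> gE C" "(fc_step X rt)\<^sup>*\<^sup>* B B'" "fc_reduced X rt B'"
    "(fc_step X rt)\<^sup>*\<^sup>* (C\<lparr>gE := gE C - E1\<rparr>) Q" "fc_reduced X rt Q" "xiso X rt B' Q"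
    using BC unfolding subforest_def fc_iso_def by blast
  obtain E0' where E0': "E0' \<subseteq> gE B'" "(fc_step X rt)\<^sup>*\<^sup>* (B\<lparr>gE := gE B - E0\<rparr>) (B'\<lparr>gE := gE B' - E0'\<rparr>)"
    using del_steps[OF E1(2) IB] E0(1) by blast
  have IB': "Inv X B'" using Inv_steps E1(2) IB by blast
  have IB'E: "Inv X (B'\<lparr>gE := gE B' - E0'\<rparr>)" using Inv_rm[OF IB'] .
  obtain N where N: "(fc_step X rt)\<^sup>*\<^sup>* (B'\<lparr>gE := gE B' - E0'\<rparr>) N" "fc_reduced X rt N"
    using nf_exists[OF IB'E] by blast
  have PN: "xiso X rt P N"
    using conf[OF Inv_rm[OF IB] E0(4,5)] E0'(2) N by (meson rtranclp_trans)
  have IC1: "Inv X (C\<lparr>gE := gE C - E1\<rparr>)" using Inv_rm[OF IC] .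
  have IQ: "Inv X Q" using Inv_steps E1(4) IC1 by blast
  obtain f where f: "isoF X rt f B' Q" using E1(6) xiso_iff by blast
  obtain E0'' where E0'': "E0'' \<subseteq> gE Q" "isoF X rt f (B'\<lparr>gE := gE B' - E0'\<rparr>) (Q\<lparr>gE := gE Q - E0''\<rparr>)"
    using iso_rm[OF IB' IQ f E0'(1)] by blast
  obtain N' where N': "(fc_step X rt)\<^sup>*\<^sup>* (Q\<lparr>gE := gE Q - E0''\<rparr>) N'" "fc_reduced X rt N'" "xiso X rt N N'"
    using sim_red[OF N IB'E Inv_rm[OF IQ]] E0''(2) xiso_iff by blast
  obtain E3 where E3: "E3 \<subseteq> gE (C\<lparr>gE := gE C - E1\<rparr>)"
    "(fc_step X rt)\<^sup>*\<^sup>* ((C\<lparr>gE := gE C - E1\<rparr>)\<lparr>gE := gE (C\<lparr>gE := gE C - E1\<rparr>) - E3\<rparr>) (Q\<lparr>gE := gE Q - E0''\<rparr>)"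
    using back_steps[OF E1(4) IC1] E0''(1) by blast
  have E13: "E1 \<union> E3 \<subseteq> gE C" using E1(1) E3(1) by auto
  have "(fc_step X rt)\<^sup>*\<^sup>* (C\<lparr>gE := gE C - (E1 \<union> E3)\<rparr>) N'"
    using E3(2) N'(1) unfolding rm_rm by (meson rtranclp_trans)
  moreover have "xiso X rt A' N'" using E0(6) PN N'(3) xiso_trans by blast
  ultimately show ?thesis unfolding subforest_def fc_iso_def using E13 E0(2,3) N'(2) by blast
qed

lemma sub_refl:
  assumes I: "Inv X A" shows "subforest X rt A A"
proof -
  obtain R where "(fc_step X rt)\<^sup>*\<^sup>* A R" "fc_reduced X rt R" using nf_exists[OF I] by blast
  then have "fc_iso X rt A (A\<lparr>gE := gE A - {}\<rparr>)" unfolding fc_iso_def using xiso_refl by fastforce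
  then show ?thesis unfolding subforest_def by blast
qed



lemma af_Inv: "agreement_forest X rt Fs G \<Longrightarrow> Inv X G"
  unfolding agreement_forest_def using xforest_Inv by blast

theorem lemma4p2:
  fixes X :: "'x set" and rt :: "'x option"
    and Fs :: "('v, 'x) xgraph list" and F :: "('v, 'x) xgraph"
  assumes "finite X"
    and "2 \<le> length Fs"
    and "\<forall>G \<in> set Fs. is_xforest X rt G"
    and "maximum_agreement_forest X rt (set Fs) F"
  shows "\<exists>F'. maximal_agreement_forest X rt (Fs ! 0) (Fs ! 1) F' \<and>
              maximum_agreement_forest X rt (set (F' # drop 2 Fs)) F"
proof -
  let ?F1 = "Fs ! 0" and ?F2 = "Fs ! 1"
  have Fs: "Fs = ?F1 # ?F2 # drop 2 Fs"
  proof (cases Fs)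
    case Nil then show ?thesis using assms(2) by simp
  next
    case (Cons a t)
    then show ?thesis
    proof (cases t)
      case Nil then show ?thesis using assms(2) Cons by simp
    next
      case (Cons b r) then show ?thesis using \<open>Fs = a # t\<close> by simp
    qed
  qed
  have sFs: "set Fs = insert ?F1 (insert ?F2 (set (drop 2 Fs)))" by (subst Fs) simp
  have IF1: "Inv X ?F1" and IF2: "Inv X ?F2" using assms(3) sFs xforest_Inv by auto
  have AF: "agreement_forest X rt (set Fs) F" and minF: "\<forall>G. agreement_forest X rt (set Fs) G \<longrightarrow> Ord F \<le> Ord G"
    using assms(4) by (auto simp: maximum_agreement_forest_def)
  have xF: "is_xforest X rt F" and subF: "\<forall>G\<in>set Fs. subforest X rt F G"
    using AF by (auto simp: agreement_forest_def)
  have IF: "Inv X F" using xforest_Inv[OF xF] .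
  let ?S = "\<lambda>G. agreement_forest X rt {?F1, ?F2} G \<and> subforest X rt F G"
  have "?S F" using xF subF sFs sub_refl[OF IF] by (auto simp: agreement_forest_def)
  then obtain F' where F': "?S F'" and minF': "\<forall>G. ?S G \<longrightarrow> Ord F' \<le> Ord G"
    using ex_has_least_nat[of ?S F Ord] by blast
  have IF': "Inv X F'" using F' af_Inv by blast
  have max: "maximal_agreement_forest X rt ?F1 ?F2 F'"
    unfolding maximal_agreement_forest_def
  proof (intro conjI notI)
    show "agreement_forest X rt {?F1, ?F2} F'" using F' by simp
  next
    assume "\<exists>F''. agreement_forest X rt {?F1, ?F2} F'' \<and> subforest X rt F' F'' \<and> Ord F'' < Ord F'"
    then obtain F'' where F'': "agreement_forest X rt {?F1, ?F2} F''" "subforest X rt F' F''" "Ord F'' < Ord F'"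
      by blast
    have "subforest X rt F F''" using sub_trans[OF IF' af_Inv[OF F''(1)]] F' F''(2) by blast
    then have "Ord F' \<le> Ord F''" using minF' F''(1) by blast
    with F''(3) show False by simp
  qed
  have "maximum_agreement_forest X rt (set (F' # drop 2 Fs)) F"
    unfolding maximum_agreement_forest_def
  proof (intro conjI allI impI)
    show "agreement_forest X rt (set (F' # drop 2 Fs)) F"
      using xF F' subF sFs by (auto simp: agreement_forest_def)
  next
    fix G assume G: "agreement_forest X rt (set (F' # drop 2 Fs)) G"
    have xG: "is_xforest X rt G" and GF': "subforest X rt G F'"
      and Gd: "\<forall>H\<in>set (drop 2 Fs). subforest X rt G H" using G by (auto simp: agreement_forest_def)
    have F'12: "subforest X rt F' ?F1" "subforest X rt F' ?F2" using F' by (auto simp: agreement_forest_def)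
    have "subforest X rt G ?F1" using sub_trans[OF IF' IF1 GF' F'12(1)] .
    moreover have "subforest X rt G ?F2" using sub_trans[OF IF' IF2 GF' F'12(2)] .
    ultimately have "agreement_forest X rt (set Fs) G" using xG Gd sFs by (auto simp: agreement_forest_def)
    then show "Ord F \<le> Ord G" using minF by blast
  qed
  then show ?thesis using max by blast
qed


end
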